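(* Let $A$ be a semiprime Archimedean $f$-algebra over $\mathbb{K}$. If $A$ is geometric mean closed, then for all $f,g\in A^{+}$ the element $(fg)^{1/2}$ exists and $f\boxtimes g=(fg)^{1/2}$.
   Context: $\mathbb{K}$ denotes $\mathbb{R}$ or $\mathbb{C}$. An Archimedean real vector lattice $E$ is square mean closed if $\sup\{(\cos\theta)f+(\sin\theta)g:\theta\in[0,2\pi]\}$ exists in $E$ for all $f,g\in E$. An Archimedean vector lattice over $\mathbb{C}$ is a complex vector space $E+iE$ (complexification) where $E$ is a square mean closed Archimedean real vector lattice; its modulus is $|f+ig|=\sup\{(\cos\theta)f+(\sin\theta)g:\theta\in[0,2\pi]\}$. An Archimedean vector lattice over $\mathbb{R}$ is an Archimedean real vector lattice with $|f|=f\vee(-f)$. For an Archimedean vector lattice $E$ over $\mathbb{K}$: positive cone $E^{+}=\{f\in E:|f|=f\}$, real part $E_\rho=\{f-g:f,g\in E^+\}$ (so $E=E_\rho$ or $E=E_\rho+iE_\rho$), with the order of $E_\rho$. $E$ is geometric mean closed if $\inf\{\theta f+\theta^{-1}g:\theta\in(0,\infty)\}$ exists in $E_\rho$ for all $f,g\in E^+$, and then $f\boxtimes g=2^{-1}\inf\{\theta f+\theta^{-1}g:\theta\in(0,\infty)\}$. An Archimedean $f$-algebra over $\mathbb{K}$ is an Archimedean vector lattice $A$ over $\mathbb{K}$ such that $A_\rho$ is an $f$-algebra (in the complex case the multiplication is extended complex-bilinearly to $A_\rho+iA_\rho$). It is semiprime if it has no nonzero nilpotent elements. For $a\in A^+$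 and $n\in\mathbb{N}$, $a^{1/n}$ denotes the unique $r\in A^+$ with $r^n=a$ (when it exists and is unique). *)

theory Defs
  imports "HOL-Analysis.Analysis"
begin

(* The real part A_rho of the algebra is modelled by a type 'a that is a real
   (not necessarily unital, not necessarily commutative) associative algebra,
   an ordered real vector space, and a lattice w.r.t. the same order. *)

definition is_sup_of :: "'a::order set \<Rightarrow> 'a \<Rightarrow> bool" where
  "is_sup_of S s \<longleftrightarrow> (\<forall>x\<in>S. x \<le> s) \<and> (\<forall>u. (\<forall>x\<in>S. x \<le> u) \<longrightarrow> s \<le> u)"

definition is_inf_of :: "'a::order set \<Rightarrow> 'a \<Rightarrow> bool" where
  "is_inf_of S s \<longleftrightarrow> (\<forall>x\<in>S. s \<le> x) \<and> (\<forall>u. (\<forall>x\<in>S. u \<le> x) \<longrightarrow> u \<le> s)"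

definition archimedean_vl :: "'a::{ordered_real_vector,lattice} itself \<Rightarrow> bool" where
  "archimedean_vl _ \<longleftrightarrow>
     (\<forall>f g::'a. 0 \<le> f \<and> (\<forall>n::nat. real n *\<^sub>R f \<le> g) \<longrightarrow> f = 0)"

definition square_mean_closed :: "'a::{ordered_real_vector,lattice} itself \<Rightarrow> bool" where
  "square_mean_closed _ \<longleftrightarrow>
     (\<forall>f g::'a. \<exists>s. is_sup_of {cos \<theta> *\<^sub>R f + sin \<theta> *\<^sub>R g | \<theta>. \<theta> \<in> {0..2*pi}} s)"

definition f_algebra :: "'a::{real_algebra,ordered_real_vector,lattice} itself \<Rightarrow> bool" where
  "f_algebra _ \<longleftrightarrow>
     (\<forall>a b::'a. 0 \<le> a \<and> 0 \<le> b \<longrightarrow> 0 \<le> a * b) \<and>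
     (\<forall>f g h::'a. inf f g = 0 \<and> 0 \<le> h \<longrightarrow> inf (h * f) g = 0 \<and> inf (f * h) g = 0)"

(* npow a n = a^(n+1)  (the algebra need not be unital) *)
fun npow :: "'a::times \<Rightarrow> nat \<Rightarrow> 'a" where
  "npow a 0 = a"
| "npow a (Suc n) = a * npow a n"

(* complexification A_rho + i A_rho, elements as pairs (real part, imaginary part) *)
definition cmult :: "'a::ring \<times> 'a \<Rightarrow> 'a \<times> 'a \<Rightarrow> 'a \<times> 'a" where
  "cmult z w = (fst z * fst w - snd z * snd w, fst z * snd w + snd z * fst w)"

fun cnpow :: "'a::ring \<times> 'a \<Rightarrow> nat \<Rightarrow> 'a \<times> 'a" where
  "cnpow z 0 = z"
| "cnpow z (Suc n) = cmult z (cnpow z n)"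

(* K_is_C = False : K = R ;  K_is_C = True : K = C *)
definition archimedean_f_algebra_over :: "bool \<Rightarrow> 'a::{real_algebra,ordered_real_vector,lattice} itself \<Rightarrow> bool" where
  "archimedean_f_algebra_over K_is_C T \<longleftrightarrow>
     archimedean_vl T \<and> f_algebra T \<and> (K_is_C \<longrightarrow> square_mean_closed T)"

definition semiprime_over :: "bool \<Rightarrow> 'a::{real_algebra,ordered_real_vector,lattice} itself \<Rightarrow> bool" where
  "semiprime_over K_is_C _ \<longleftrightarrow>
     (if K_is_C then (\<forall>z::'a \<times> 'a. (\<exists>n. cnpow z n = (0, 0)) \<longrightarrow> z = (0, 0))
      else (\<forall>a::'a. (\<exists>n. npow a n = 0) \<longrightarrow> a = 0))"

definition geometric_mean_closed :: "'a::{ordered_real_vector,lattice} itself \<Rightarrow> bool" where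
  "geometric_mean_closed _ \<longleftrightarrow>
     (\<forall>f g::'a. 0 \<le> f \<and> 0 \<le> g \<longrightarrow>
        (\<exists>s. is_inf_of {\<theta> *\<^sub>R f + inverse \<theta> *\<^sub>R g | \<theta>. \<theta> > 0} s))"

definition gmean :: "'a::{ordered_real_vector,lattice} \<Rightarrow> 'a \<Rightarrow> 'a" (infixl "\<boxtimes>" 70) where
  "f \<boxtimes> g = (1/2) *\<^sub>R (THE s. is_inf_of {\<theta> *\<^sub>R f + inverse \<theta> *\<^sub>R g | \<theta>. \<theta> > 0} s)"

definition nth_root_exists :: "nat \<Rightarrow> 'a::{real_algebra,ordered_real_vector,lattice} \<Rightarrow> bool" where
  "nth_root_exists n a \<longleftrightarrow> (\<exists>!r. 0 \<le> r \<and> npow r (n - 1) = a)"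

definition nth_root_A :: "nat \<Rightarrow> 'a::{real_algebra,ordered_real_vector,lattice} \<Rightarrow> 'a" where
  "nth_root_A n a = (THE r. 0 \<le> r \<and> npow r (n - 1) = a)"

end

theory Submission
  imports Defs "HOL-Library.Lattice_Algebras"
begin


interpretation vl: lattice_ab_group_add "(+)" "0::'a::{ordered_ab_group_add,lattice}" "(-)" uminus "(\<le>)" "(<)" inf sup
  by unfold_locales

declare vl.neg_inf_eq_sup[simp del] vl.neg_sup_eq_inf[simp del] vl.diff_inf_eq_sup[simp del] vl.diff_sup_eq_inf[simp del]

lemma e1: "x - inf x y = sup (x - y) (0::'a::{ordered_ab_group_add,lattice})"
    by (simp add: vl.diff_inf_eq_sup vl.add_sup_distrib_left sup_commute)

lemma e2: "inf x y = y - sup (y - x) (0::'a::{ordered_ab_group_add,lattice})"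
proof -
  have "inf x y = y - (y - inf y x)" by (simp add: inf_commute)
  thus ?thesis by (simp only: e1)
qed

lemma vl_distrib_le:
  fixes a b c :: "'a::{ordered_ab_group_add,lattice}"
  shows "inf a (sup b c) \<le> sup (inf a b) (inf a c)"
proof -
  define u where "u = sup (inf a b) (inf a c)"
  define w where "w = sup b c"
  have pm: "sup (b - a) 0 \<le> sup (w - a) 0" "sup (c - a) 0 \<le> sup (w - a) 0"
    unfolding w_def by (intro sup_mono diff_right_mono order_refl sup_ge1 sup_ge2)+
  have ib: "inf a b \<le> u" "inf a c \<le> u" unfolding u_def by (rule sup_ge1, rule sup_ge2)
  have "b = inf b a + (b - inf b a)" by simp
  also have "\<dots> = inf a b + sup (b - a) 0" by (subst e1) (simp add: inf_commute)
  also have "\<dots> \<le> u + sup (w - a) 0" using add_mono[OF ib(1) pm(1)] .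
  finally have bb: "b \<le> u + sup (w - a) 0" .
  have "c = inf c a + (c - inf c a)" by simp
  also have "\<dots> = inf a c + sup (c - a) 0" by (subst e1) (simp add: inf_commute)
  also have "\<dots> \<le> u + sup (w - a) 0" using add_mono[OF ib(2) pm(2)] .
  finally have cc: "c \<le> u + sup (w - a) 0" .
  have "w \<le> u + sup (w - a) 0" unfolding w_def using bb cc unfolding w_def by (rule sup_least)
  hence "w - sup (w - a) 0 \<le> u" by (simp add: algebra_simps)
  moreover have "inf a w = w - sup (w - a) 0" by (rule e2)
  ultimately show ?thesis by (simp add: w_def u_def)
qed


interpretation dl: distrib_lattice inf "(\<le>)" "(<) :: 'a::{ordered_ab_group_add,lattice} \<Rightarrow> _" sup
proof unfold_locales
  fix x y z :: 'a
  show "sup x (inf y z) = inf (sup x y) (sup x z)"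
  proof (rule antisym)
    show "sup x (inf y z) \<le> inf (sup x y) (sup x z)"
      by (intro sup_least inf_greatest) (auto intro: le_infI1 le_infI2 le_supI2)
  next
    have "inf (sup x y) (sup x z) \<le> sup (inf (sup x y) x) (inf (sup x y) z)"
      by (rule vl_distrib_le)
    also have "\<dots> \<le> sup x (inf y z)"
    proof (rule sup_least)
      show "inf (sup x y) x \<le> sup x (inf y z)" by (rule le_supI1, rule inf_le2)
      have "inf (sup x y) z = inf z (sup x y)" by (rule inf_commute)
      also have "\<dots> \<le> sup (inf z x) (inf z y)" by (rule vl_distrib_le)
      also have "\<dots> \<le> sup x (inf y z)"
        by (intro sup_least) (auto intro: le_supI1 le_supI2 le_infI2 simp: inf_commute)
      finally show "inf (sup x y) z \<le> sup x (inf y z)" .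
    qed
    finally show "inf (sup x y) (sup x z) \<le> sup x (inf y z)" .
  qed
qed

definition pos :: "'a::{ordered_ab_group_add,lattice} \<Rightarrow> 'a" where "pos x = sup x 0"
definition ng :: "'a::{ordered_ab_group_add,lattice} \<Rightarrow> 'a" where "ng x = sup (-x) 0"
definition ab :: "'a::{ordered_ab_group_add,lattice} \<Rightarrow> 'a" where "ab x = sup x (-x)"

lemma pos_ge0[simp]: "0 \<le> pos x" by (simp add: pos_def)
lemma ng_ge0[simp]: "0 \<le> ng x" by (simp add: ng_def)
lemma pos_ng: "pos x - ng x = x"
proof -
  have "pos x - ng x = sup x 0 + inf x 0"
    by (simp add: pos_def ng_def vl.diff_sup_eq_inf)
  also have "\<dots> = x + 0" by (rule vl.add_eq_inf_sup[symmetric])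
  finally show ?thesis by simp
qed
lemma ng_eq: "ng x = pos x - x" using pos_ng[of x] by (simp add: algebra_simps)
lemma pos_ng_disj: "inf (pos x) (ng x) = 0"
proof -
  have "inf (pos x) (ng x) = pos x + inf 0 (-x)" by (simp add: ng_eq vl.add_inf_distrib_left)
  also have "inf 0 (-x) = - sup 0 x" by (simp add: vl.neg_sup_eq_inf)
  finally show ?thesis by (simp add: pos_def sup_commute)
qed
lemma ab_eq: "ab x = pos x + ng x"
proof -
  have "pos x + ng x = sup (x + ng x) (ng x)" by (simp add: pos_def vl.add_sup_distrib_right)
  also have "x + ng x = sup 0 x" by (simp add: ng_def vl.add_sup_distrib_left)
  finally have "pos x + ng x = sup (sup 0 x) (sup (-x) 0)" by (simp add: ng_def)
  also have "\<dots> = sup (sup x (-x)) 0" by (simp add: sup_aci)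
  also have "\<dots> = sup x (-x)"
  proof -
    have "0 \<le> sup x (-x) + sup x (-x)"
      using add_mono[OF sup_ge1[of x "-x"] sup_ge2[of "-x" x]] by (simp add: sup_commute)
    hence "0 \<le> sup x (-x)" by simp
    thus ?thesis by (simp add: sup_absorb1)
  qed
  finally show ?thesis by (simp add: ab_def)
qed
lemma ab_ge0[simp]: "0 \<le> ab x" by (simp add: ab_eq)
lemma pos_le_ab: "pos x \<le> ab x" by (simp add: ab_eq)
lemma ng_le_ab: "ng x \<le> ab x" by (simp add: ab_eq)
lemma le_ab: "x \<le> ab x" by (simp add: ab_def)
lemma neg_le_ab: "-x \<le> ab x" by (simp add: ab_def)
lemma ab_least: "x \<le> y \<Longrightarrow> -x \<le> y \<Longrightarrow> ab x \<le> y" by (simp add: ab_def)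
lemma ab_minus: "ab (-x) = ab x" by (simp add: ab_def sup_commute)
lemma pos_mono: "x \<le> y \<Longrightarrow> pos x \<le> pos y" by (simp add: pos_def le_supI1)
lemma pos_least: "x \<le> y \<Longrightarrow> 0 \<le> y \<Longrightarrow> pos x \<le> y" by (simp add: pos_def)
lemma pos_id: "0 \<le> x \<Longrightarrow> pos x = x" by (simp add: pos_def sup_absorb1)
lemma le_pos: "x \<le> pos x" by (simp add: pos_def)
lemma inf_as_pos: "inf x y = x - pos (x - y)"
  using e2[of y x] by (simp add: pos_def inf_commute)
lemma ng_as_pos: "ng x = pos (-x)" by (simp add: ng_def pos_def)

lemma disj_pos_diff:
  fixes P N :: "'a::{ordered_ab_group_add,lattice}"
  assumes "inf P N = 0"
  shows "pos (P - N) = P"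
proof -
  have "pos (P - N) = sup P N - N" using vl.add_sup_distrib_right[of P N "-N"] by (simp add: pos_def)
  also have "sup P N = P + N - inf P N" using vl.add_eq_inf_sup[of P N] by (simp add: algebra_simps)
  finally show ?thesis using assms by simp
qed

lemma disj_add:
  fixes u v w :: "'a::{ordered_ab_group_add,lattice}"
  assumes "0 \<le> u" "0 \<le> v" "0 \<le> w" "inf u w = 0" "inf v w = 0"
  shows "inf (u + v) w = 0"
proof -
  have eq: "inf u w + inf v w = inf (inf (u+v) (u+w)) (inf (w+v) (w+w))"
    by (simp add: vl.add_inf_distrib_left vl.add_inf_distrib_right inf_aci add.commute)
  have "inf (u+v) w \<le> inf (inf (u+v) (u+w)) (inf (w+v) (w+w))"
  proof (intro le_infI)
    show "inf (u+v) w \<le> u + v" by simp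
    show "inf (u+v) w \<le> u + w" using assms(1) by (meson add_increasing inf_le2 order_trans)
    show "inf (u+v) w \<le> w + v" using assms(2) by (meson add_increasing2 inf_le2 order_trans)
    show "inf (u+v) w \<le> w + w" using assms(3) by (meson add_increasing2 inf_le2 order_trans)
  qed
  hence "inf (u+v) w \<le> inf u w + inf v w" by (simp only: eq)
  hence "inf (u+v) w \<le> 0" using assms(4,5) by simp
  moreover have "0 \<le> inf (u+v) w" using assms by simp
  ultimately show ?thesis by simp
qed

lemma inf_pos_c:
  fixes z c :: "'a::{ordered_ab_group_add,lattice}"
  assumes "0 \<le> c" shows "inf (pos z) c = pos (inf z c)"
proof -
  have "inf (pos z) c = inf c (sup z 0)" by (simp add: pos_def inf_commute)
  also have "\<dots> = sup (inf c z) (inf c 0)" by (rule dl.inf_sup_distrib1)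
  also have "inf c 0 = 0" using assms by (simp add: inf_absorb2)
  finally show ?thesis by (simp add: pos_def inf_commute)
qed


section \<open>f-algebra basics\<close>

lemma fa_nonneg:
  fixes a b :: "'a::{real_algebra,ordered_real_vector,lattice}"
  shows "f_algebra TYPE('a) \<Longrightarrow> 0 \<le> a \<Longrightarrow> 0 \<le> b \<Longrightarrow> 0 \<le> a * b"
  by (simp add: f_algebra_def)

lemma fa_dL:
  fixes x y h :: "'a::{real_algebra,ordered_real_vector,lattice}"
  shows "f_algebra TYPE('a) \<Longrightarrow> inf x y = 0 \<Longrightarrow> 0 \<le> h \<Longrightarrow> inf (h * x) y = 0"
  by (simp add: f_algebra_def)

lemma fa_dR:
  fixes x y h :: "'a::{real_algebra,ordered_real_vector,lattice}"
  shows "f_algebra TYPE('a) \<Longrightarrow> inf x y = 0 \<Longrightarrow> 0 \<le> h \<Longrightarrow> inf (x * h) y = 0"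
  by (simp add: f_algebra_def)

lemma fa_monoL:
  fixes x y h :: "'a::{real_algebra,ordered_real_vector,lattice}"
  assumes "f_algebra TYPE('a)" "0 \<le> h" "x \<le> y"
  shows "h * x \<le> h * y"
proof -
  have "0 \<le> h * (y - x)" using fa_nonneg[OF assms(1,2), of "y - x"] assms(3) by simp
  thus ?thesis by (simp add: right_diff_distrib)
qed

lemma fa_monoR:
  fixes x y h :: "'a::{real_algebra,ordered_real_vector,lattice}"
  assumes "f_algebra TYPE('a)" "0 \<le> h" "x \<le> y"
  shows "x * h \<le> y * h"
proof -
  have "0 \<le> (y - x) * h" using fa_nonneg[OF assms(1), of "y - x" h] assms(2,3) by simp
  thus ?thesis by (simp add: left_diff_distrib)
qed

lemma fa_disj_zero:
  fixes a b :: "'a::{real_algebra,ordered_real_vector,lattice}"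
  assumes FA: "f_algebra TYPE('a)" and "0 \<le> a" "0 \<le> b" "inf a b = 0"
  shows "a * b = 0"
proof -
  have "inf b a = 0" using assms by (simp add: inf_commute)
  hence "inf (a * b) a = 0" using fa_dL[OF FA] assms by blast
  hence "inf a (a * b) = 0" by (simp add: inf_commute)
  hence "inf (a * b) (a * b) = 0" using fa_dR[OF FA] assms by blast
  thus ?thesis by simp
qed

lemma pos_ng_prod:
  fixes x :: "'a::{real_algebra,ordered_real_vector,lattice}"
  assumes FA: "f_algebra TYPE('a)"
  shows "pos x * ng x = 0" "ng x * pos x = 0"
  using fa_disj_zero[OF FA, of "pos x" "ng x"] fa_disj_zero[OF FA, of "ng x" "pos x"]
    pos_ng_disj[of x] by (simp_all add: inf_commute)

lemma x_mult_pos: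
  fixes x :: "'a::{real_algebra,ordered_real_vector,lattice}"
  assumes FA: "f_algebra TYPE('a)"
  shows "x * pos x = pos x * pos x" "pos x * x = pos x * pos x"
proof -
  have x: "x = pos x - ng x" by (simp add: pos_ng)
  show "x * pos x = pos x * pos x"
    by (subst x) (simp add: left_diff_distrib pos_ng_prod[OF FA])
  show "pos x * x = pos x * pos x"
    by (subst x) (simp add: right_diff_distrib pos_ng_prod[OF FA])
qed

lemma sq_nonneg:
  fixes x :: "'a::{real_algebra,ordered_real_vector,lattice}"
  assumes FA: "f_algebra TYPE('a)"
  shows "0 \<le> x * x"
proof -
  have x: "x = pos x - ng x" by (simp add: pos_ng)
  have "x * x = pos x * pos x + ng x * ng x"
    by (subst (1 2) x) (simp add: left_diff_distrib right_diff_distrib pos_ng_prod[OF FA])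
  thus ?thesis using fa_nonneg[OF FA] by (simp add: add_nonneg_nonneg)
qed

lemma pm_le:
  fixes P N :: "'a::ordered_ab_group_add"
  assumes "0 \<le> P" "0 \<le> N"
  shows "P - N \<le> P + N" "- (P - N) \<le> P + N"
proof -
  have "- N \<le> N" using assms(2) by (meson neg_le_0_iff_le order_trans)
  hence "P + - N \<le> P + N" by (rule add_left_mono)
  thus "P - N \<le> P + N" by simp
  have "- P \<le> P" using assms(1) by (meson neg_le_0_iff_le order_trans)
  hence "- P + N \<le> P + N" by (rule add_right_mono)
  thus "- (P - N) \<le> P + N" by simp
qed

lemma ab_multL:
  fixes a e :: "'a::{real_algebra,ordered_real_vector,lattice}"
  assumes FA: "f_algebra TYPE('a)" and a: "0 \<le> a"
  shows "ab (a * e) \<le> a * ab e"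
proof (rule ab_least)
  have e: "e = pos e - ng e" by (simp add: pos_ng)
  have p: "0 \<le> a * pos e" "0 \<le> a * ng e" using fa_nonneg[OF FA] a by auto
  have ae: "a * e = a * pos e - a * ng e" by (subst e) (simp add: right_diff_distrib)
  have abe: "a * ab e = a * pos e + a * ng e" by (simp add: ab_eq distrib_left)
  show "a * e \<le> a * ab e" using pm_le[OF p] by (simp only: ae abe)
  show "- (a * e) \<le> a * ab e" using pm_le[OF p] by (simp only: ae abe)
qed

lemma ab_multR:
  fixes a e :: "'a::{real_algebra,ordered_real_vector,lattice}"
  assumes FA: "f_algebra TYPE('a)" and a: "0 \<le> a"
  shows "ab (e * a) \<le> ab e * a"
proof (rule ab_least)
  have e: "e = pos e - ng e" by (simp add: pos_ng)
  have p: "0 \<le> pos e * a" "0 \<le> ng e * a" using fa_nonneg[OF FA] a by auto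
  have ae: "e * a = pos e * a - ng e * a" by (subst e) (simp add: left_diff_distrib)
  have abe: "ab e * a = pos e * a + ng e * a" by (simp add: ab_eq distrib_right)
  show "e * a \<le> ab e * a" using pm_le[OF p] by (simp only: ae abe)
  show "- (e * a) \<le> ab e * a" using pm_le[OF p] by (simp only: ae abe)
qed

lemma ab_add_le:
  fixes x y :: "'a::{ordered_ab_group_add,lattice}"
  shows "ab (x + y) \<le> ab x + ab y"
proof (rule ab_least)
  show "x + y \<le> ab x + ab y" by (intro add_mono le_ab)
  have "- x + - y \<le> ab x + ab y" by (intro add_mono neg_le_ab)
  thus "- (x + y) \<le> ab x + ab y" by simp
qed

lemma hom_inf:
  fixes T :: "'a::{ordered_ab_group_add,lattice} \<Rightarrow> 'a"
  assumes add: "\<And>x y. T (x + y) = T x + T y"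
    and posT: "\<And>x. 0 \<le> x \<Longrightarrow> 0 \<le> T x"
    and dis: "\<And>x y. 0 \<le> x \<Longrightarrow> 0 \<le> y \<Longrightarrow> inf x y = 0 \<Longrightarrow> inf (T x) (T y) = 0"
  shows "T (inf x y) = inf (T x) (T y)"
proof -
  have diff: "T (a - b) = T a - T b" for a b
    using add[of "a - b" b] by (simp add: algebra_simps)
  have tp: "T (pos z) = pos (T z)" for z
  proof -
    have "T z = T (pos z) - T (ng z)" using diff[of "pos z" "ng z"] by (simp add: pos_ng)
    moreover have "inf (T (pos z)) (T (ng z)) = 0"
      using dis[of "pos z" "ng z"] pos_ng_disj[of z] by simp
    ultimately show ?thesis using disj_pos_diff by metis
  qed
  have "T (inf x y) = T x - T (pos (x - y))" by (simp add: inf_as_pos diff)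
  also have "\<dots> = T x - pos (T x - T y)" by (simp add: tp diff)
  also have "\<dots> = inf (T x) (T y)" by (simp add: inf_as_pos)
  finally show ?thesis .
qed

lemma arch_zero:
  fixes x K :: "'a::{ordered_real_vector,lattice}"
  assumes AR: "archimedean_vl TYPE('a)" and x: "0 \<le> x"
    and le: "\<And>n::nat. n \<ge> 1 \<Longrightarrow> x \<le> (1 / real n) *\<^sub>R K"
  shows "x = 0"
proof -
  have "real n *\<^sub>R x \<le> K" for n :: nat
  proof (cases "n = 0")
    case True
    have "x \<le> K" using le[of 1] by simp
    thus ?thesis using True x by simp
  next
    case False
    hence "real n *\<^sub>R x \<le> real n *\<^sub>R ((1 / real n) *\<^sub>R K)"
      using le[of n] by (intro scaleR_left_mono) auto
    thus ?thesis using False by simp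
  qed
  thus ?thesis using AR x unfolding archimedean_vl_def by blast
qed

lemma sq_zero:
  fixes a :: "'a::{real_algebra,ordered_real_vector,lattice}"
  assumes SP: "semiprime_over K TYPE('a)" and "a * a = 0"
  shows "a = 0"
proof (cases K)
  case True
  have "cnpow (a, 0) 1 = (0, 0)" using assms by (simp add: cmult_def)
  hence "\<exists>n. cnpow (a, 0) n = (0, 0)" by blast
  thus ?thesis using SP True unfolding semiprime_over_def by auto
next
  case False
  have "npow a 1 = 0" using assms by simp
  hence "\<exists>n. npow a n = 0" by blast
  thus ?thesis using SP False unfolding semiprime_over_def by auto
qed




section \<open>Grid minimum lemma\<close>

fun mm :: "'a::{ordered_real_vector,lattice} \<Rightarrow> 'a \<Rightarrow> nat \<Rightarrow> 'a" where
  "mm x c 0 = ab x"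
| "mm x c (Suc N) = inf (mm x c N) (ab (x - real (Suc N) *\<^sub>R c))"

lemma ab_id: "0 \<le> x \<Longrightarrow> ab x = x"
proof -
  assume "0 \<le> x"
  hence "pos x = x" by (rule pos_id)
  moreover have "ng x = pos x - x" by (rule ng_eq)
  ultimately show ?thesis unfolding ab_eq by simp
qed

lemma ab_zero_imp: "ab (x::'a::{ordered_ab_group_add,lattice}) = 0 \<Longrightarrow> x = 0"
proof -
  assume h: "ab x = 0"
  have "x \<le> 0" using le_ab[of x] h by simp
  moreover have "-x \<le> 0" using neg_le_ab[of x] h by simp
  hence "0 \<le> x" by simp
  ultimately show "x = 0" by (rule order.antisym)
qed

lemma key_step:
  fixes z c :: "'a::{ordered_ab_group_add,lattice}"
  assumes c: "0 \<le> c"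
  shows "inf (c + pos z) (ab (z - c)) \<le> c + pos (z - c)"
proof -
  define m where "m = inf (pos z) c"
  define P where "P = pos (z - c)"
  define q where "q = ng (z - c)"
  define w where "w = inf z c"
  have ppc: "pos (pos z - c) = P"
  proof -
    have "pos z - c = sup (z - c) (-c)"
      using vl.add_sup_distrib_right[of z 0 "-c"] by (simp add: pos_def)
    hence "pos (pos z - c) = sup (z - c) (sup (-c) 0)" by (simp add: pos_def sup_assoc)
    also have "sup (-c) 0 = (0::'a)" using c by (simp add: sup_absorb2)
    finally show ?thesis by (simp add: P_def pos_def)
  qed
  have I1: "pos z = m + P"
  proof -
    have "pos z - inf (pos z) c = pos (pos z - c)" by (simp add: e1 pos_def)
    thus ?thesis by (simp add: m_def ppc algebra_simps)
  qed
  have abzc: "ab (z - c) = P + q" by (simp add: ab_eq P_def q_def)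
  have "inf (c + pos z) (ab (z - c)) = inf (P + (c + m)) (P + q)"
    by (simp add: I1 abzc algebra_simps)
  also have "\<dots> = P + inf (c + m) q" by (simp add: vl.add_inf_distrib_left)
  finally have L: "inf (c + pos z) (ab (z - c)) = P + inf (c + m) q" .
  have mw: "m = pos w" by (simp add: m_def w_def inf_pos_c[OF c])
  have qw: "q - c = - w"
  proof -
    have "q - c = sup (c - z) 0 - c" by (simp add: q_def ng_def)
    also have "\<dots> = sup (-z) (-c)" using vl.add_sup_distrib_right[of "c - z" 0 "-c"] by simp
    also have "\<dots> = - w" by (simp add: w_def vl.neg_inf_eq_sup)
    finally show ?thesis .
  qed
  have "inf m (q - c) \<le> 0"
  proof -
    have "inf (pos w) (- w) \<le> inf (pos w) (ng w)" by (rule inf_mono) (simp_all add: ng_def)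
    thus ?thesis using pos_ng_disj[of w] by (simp add: mw qw)
  qed
  moreover have "inf (c + m) q = c + inf m (q - c)"
    by (simp add: vl.add_inf_distrib_left)
  ultimately have "inf (c + m) q \<le> c" by simp
  thus ?thesis using L by (simp add: P_def)
qed

lemma mm_bound:
  fixes x c :: "'a::{ordered_real_vector,lattice}"
  assumes x: "0 \<le> x" and c: "0 \<le> c"
  shows "mm x c N \<le> c + pos (x - real N *\<^sub>R c)"
proof (induction N)
  case 0
  show ?case using x c by (simp add: ab_id pos_id add_increasing)
next
  case (Suc N)
  define z where "z = x - real N *\<^sub>R c"
  have zz: "x - real (Suc N) *\<^sub>R c = z - c" by (simp add: z_def algebra_simps scaleR_left_distrib)
  have "mm x c (Suc N) = inf (mm x c N) (ab (z - c))" by (simp only: mm.simps zz)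
  also have "\<dots> \<le> inf (c + pos z) (ab (z - c))"
    using Suc.IH by (intro inf_mono) (simp_all add: z_def)
  also have "\<dots> \<le> c + pos (z - c)" by (rule key_step[OF c])
  finally show ?case by (simp only: zz)
qed

lemma mm_nonneg: "0 \<le> mm x c N"
  by (induction N) simp_all

lemma mm_hom:
  fixes x c Q :: "'a::{ordered_real_vector,lattice}" and T :: "'a \<Rightarrow> 'a"
  assumes add: "\<And>x y. T (x + y) = T x + T y"
    and posT: "\<And>x. 0 \<le> x \<Longrightarrow> 0 \<le> T x"
    and dis: "\<And>x y. 0 \<le> x \<Longrightarrow> 0 \<le> y \<Longrightarrow> inf x y = 0 \<Longrightarrow> inf (T x) (T y) = 0"
    and le: "\<And>j. j \<le> N \<Longrightarrow> Q \<le> T (ab (x - real j *\<^sub>R c))"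
  shows "Q \<le> T (mm x c N)"
  using le
proof (induction N)
  case 0
  then show ?case by (metis mm.simps(1) le0 diff_zero of_nat_0 scaleR_zero_left)
next
  case (Suc N)
  have "Q \<le> T (mm x c N)" using Suc by simp
  moreover have "Q \<le> T (ab (x - real (Suc N) *\<^sub>R c))" by (rule Suc.prems) simp
  ultimately show ?case by (simp add: hom_inf[OF add posT dis])
qed

lemma sq_ab:
  fixes x :: "'a::{real_algebra,ordered_real_vector,lattice}"
  assumes FA: "f_algebra TYPE('a)"
  shows "ab x * ab x = x * x"
proof -
  have x: "x = pos x - ng x" by (simp add: pos_ng)
  have "x * x = pos x * pos x + ng x * ng x"
    by (subst (1 2) x) (simp add: left_diff_distrib right_diff_distrib pos_ng_prod[OF FA])
  moreover have "ab x * ab x = pos x * pos x + ng x * ng x"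
    unfolding ab_eq by (simp add: distrib_left distrib_right pos_ng_prod[OF FA])
  ultimately show ?thesis by simp
qed

lemma sq_mono:
  fixes a b :: "'a::{real_algebra,ordered_real_vector,lattice}"
  assumes FA: "f_algebra TYPE('a)" and "0 \<le> a" "a \<le> b"
  shows "a * a \<le> b * b"
proof -
  have "a * a \<le> a * b" using fa_monoL[OF FA assms(2,3)] .
  also have "\<dots> \<le> b * b" using fa_monoR[OF FA _ assms(3), of b] assms(2,3) order_trans by blast
  finally show ?thesis .
qed

lemma sq_inf:
  fixes a b :: "'a::{real_algebra,ordered_real_vector,lattice}"
  assumes FA: "f_algebra TYPE('a)" and a: "0 \<le> a" and b: "0 \<le> b"
  shows "inf a b * inf a b = inf (a * a) (b * b)"
proof -
  define m where "m = inf a b"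
  define a' where "a' = a - m"
  define b' where "b' = b - m"
  have m0: "0 \<le> m" using a b by (simp add: m_def)
  have a0: "0 \<le> a'" "0 \<le> b'" by (simp_all add: a'_def b'_def m_def)
  have dab: "inf a' b' = 0"
  proof -
    have "inf a' b' + m = inf (a' + m) (b' + m)" by (rule vl.add_inf_distrib_right)
    also have "\<dots> = m" by (simp add: a'_def b'_def m_def)
    finally show ?thesis by simp
  qed
  define X where "X = m * a' + a' * m + a' * a'"
  define Y where "Y = m * b' + b' * m + b' * b'"
  have X0: "0 \<le> X" and Y0: "0 \<le> Y"
    using fa_nonneg[OF FA] m0 a0 by (simp_all add: X_def Y_def add_nonneg_nonneg)
  have ea: "a = m + a'" and eb: "b = m + b'" by (simp_all add: a'_def b'_def)
  have aa: "a * a = m * m + X"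
  proof -
    have "a * a = (m + a') * (m + a')" using ea by simp
    also have "\<dots> = m * m + X" unfolding X_def by (simp only: distrib_left distrib_right add_ac)
    finally show ?thesis .
  qed
  have bb: "b * b = m * m + Y"
  proof -
    have "b * b = (m + b') * (m + b')" using eb by simp
    also have "\<dots> = m * m + Y" unfolding Y_def by (simp only: distrib_left distrib_right add_ac)
    finally show ?thesis .
  qed
  have "inf X b' = 0"
  proof -
    have 1: "inf (m * a') b' = 0" using fa_dL[OF FA dab m0] .
    have 2: "inf (a' * m) b' = 0" using fa_dR[OF FA dab m0] .
    have 3: "inf (a' * a') b' = 0" using fa_dL[OF FA dab a0(1)] .
    have "inf (m * a' + a' * m) b' = 0"
      using disj_add[OF _ _ a0(2) 1 2] fa_nonneg[OF FA] m0 a0 by simp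
    thus ?thesis unfolding X_def
      using disj_add[OF _ _ a0(2) _ 3] fa_nonneg[OF FA] m0 a0 by (simp add: add_nonneg_nonneg)
  qed
  hence dXb: "inf b' X = 0" by (simp add: inf_commute)
  have "inf Y X = 0"
  proof -
    have 1: "inf (m * b') X = 0" using fa_dL[OF FA dXb m0] .
    have 2: "inf (b' * m) X = 0" using fa_dR[OF FA dXb m0] .
    have 3: "inf (b' * b') X = 0" using fa_dL[OF FA dXb a0(2)] .
    have "inf (m * b' + b' * m) X = 0"
      using disj_add[OF _ _ X0 1 2] fa_nonneg[OF FA] m0 a0 by simp
    thus ?thesis unfolding Y_def
      using disj_add[OF _ _ X0 _ 3] fa_nonneg[OF FA] m0 a0 by (simp add: add_nonneg_nonneg)
  qed
  hence "inf (a * a) (b * b) = m * m"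
    by (simp add: aa bb flip: vl.add_inf_distrib_left) (simp add: inf_commute)
  thus ?thesis by (simp add: m_def)
qed




lemma scale_div_le:
  fixes u v :: "'a::ordered_real_vector"
  assumes "t > 0" "t *\<^sub>R u \<le> v"
  shows "u \<le> (1 / t) *\<^sub>R v"
proof -
  have "(1/t) *\<^sub>R (t *\<^sub>R u) \<le> (1/t) *\<^sub>R v" using assms by (intro scaleR_left_mono) auto
  thus ?thesis using assms by simp
qed

lemma comm_pos:
  fixes a b :: "'a::{real_algebra,ordered_real_vector,lattice}"
  assumes FA: "f_algebra TYPE('a)" and AR: "archimedean_vl TYPE('a)"
    and a: "0 \<le> a" and b: "0 \<le> b"
  shows "a * b = b * a"
proof -
  define d where "d = a * b - b * a"
  define T where "T = (\<lambda>w. a * w + w * a)"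
  have Tadd: "\<And>x y. T (x + y) = T x + T y" by (simp add: T_def distrib_left distrib_right algebra_simps)
  have Tpos: "\<And>x. 0 \<le> x \<Longrightarrow> 0 \<le> T x" using fa_nonneg[OF FA] a by (simp add: T_def add_nonneg_nonneg)
  have Tmono: "\<And>x y. x \<le> y \<Longrightarrow> T x \<le> T y"
  proof -
    fix x y :: 'a assume "x \<le> y"
    hence "0 \<le> T (y - x)" using Tpos by simp
    moreover have "T y = T x + T (y - x)" using Tadd[of x "y - x"] by simp
    ultimately show "T x \<le> T y" by (metis add_increasing2 order_refl)
  qed
  have Tdis: "\<And>x y. 0 \<le> x \<Longrightarrow> 0 \<le> y \<Longrightarrow> inf x y = 0 \<Longrightarrow> inf (T x) (T y) = 0"
  proof -
    fix x y :: 'a assume x: "0 \<le> x" and y: "0 \<le> y" and xy: "inf x y = 0"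
    have X0: "0 \<le> T x" using Tpos x .
    have 1: "inf (a*x) y = 0" using fa_dL[OF FA xy a] .
    have 2: "inf (x*a) y = 0" using fa_dR[OF FA xy a] .
    have "inf (a*x + x*a) y = 0" using disj_add[OF _ _ y 1 2] fa_nonneg[OF FA] a x by simp
    hence yX: "inf y (T x) = 0" by (simp add: inf_commute T_def)
    have 3: "inf (a*y) (T x) = 0" using fa_dL[OF FA yX a] .
    have 4: "inf (y*a) (T x) = 0" using fa_dR[OF FA yX a] .
    have "inf (a*y + y*a) (T x) = 0" using disj_add[OF _ _ X0 3 4] fa_nonneg[OF FA] a y by simp
    thus "inf (T x) (T y) = 0" by (simp add: inf_commute T_def)
  qed
  have key: "ab d \<le> T (ab (b - l *\<^sub>R a))" for l :: real
  proof -
    define e where "e = b - l *\<^sub>R a"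
    have "d = a * e - e * a" by (simp add: d_def e_def algebra_simps)
    hence "ab d \<le> ab (a*e) + ab (- (e*a))" using ab_add_le[of "a*e" "-(e*a)"] by simp
    also have "\<dots> \<le> a * ab e + ab e * a"
      unfolding ab_minus by (intro add_mono ab_multL[OF FA a] ab_multR[OF FA a])
    finally show ?thesis by (simp add: T_def e_def)
  qed
  have bound: "ab d \<le> (1 / real n) *\<^sub>R (2 *\<^sub>R (a*a) + 2 *\<^sub>R (b*b))" if n: "n \<ge> 1" for n :: nat
  proof -
    define t where "t = real n"
    have t0: "t > 0" using n by (simp add: t_def)
    define N where "N = n * n"
    define c where "c = (1 / t) *\<^sub>R a"
    have c0: "0 \<le> c" using a t0 unfolding c_def by (intro scaleR_nonneg_nonneg) auto
    have "ab d \<le> T (mm b c N)"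
    proof (rule mm_hom[OF Tadd Tpos Tdis])
      fix j assume "j \<le> N"
      show "ab d \<le> T (ab (b - real j *\<^sub>R c))" using key[of "real j * (1/t)"] by (simp add: c_def)
    qed
    also have "\<dots> \<le> T (c + pos (b - real N *\<^sub>R c))" by (rule Tmono[OF mm_bound[OF b c0]])
    also have "real N *\<^sub>R c = t *\<^sub>R a" using t0 by (simp add: N_def c_def t_def)
    finally have 1: "ab d \<le> T c + T (pos (b - t *\<^sub>R a))" by (simp add: Tadd)
    define p where "p = pos (b - t *\<^sub>R a)"
    have p0: "0 \<le> p" by (simp add: p_def)
    have ta: "0 \<le> t *\<^sub>R a" using a t0 by (intro scaleR_nonneg_nonneg) auto
    have pb: "p \<le> b" unfolding p_def using ta b by (intro pos_least) auto
    have xp: "(b - t *\<^sub>R a) * p = p * p" "p * (b - t *\<^sub>R a) = p * p"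
      using x_mult_pos[OF FA, of "b - t *\<^sub>R a"] by (simp_all add: p_def)
    have pp: "0 \<le> p * p" using fa_nonneg[OF FA p0 p0] .
    have "t *\<^sub>R (a * p) \<le> b * p" using xp(1) pp by (simp add: algebra_simps)
    hence ap: "a * p \<le> (1/t) *\<^sub>R (b * p)" by (rule scale_div_le[OF t0])
    have "t *\<^sub>R (p * a) \<le> p * b" using xp(2) pp by (simp add: algebra_simps)
    hence pa: "p * a \<le> (1/t) *\<^sub>R (p * b)" by (rule scale_div_le[OF t0])
    have bp: "b * p \<le> b * b" by (rule fa_monoL[OF FA b pb])
    have pb': "p * b \<le> b * b" by (rule fa_monoR[OF FA b pb])
    have "T p \<le> (1/t) *\<^sub>R (b * p) + (1/t) *\<^sub>R (p * b)" unfolding T_def by (rule add_mono[OF ap pa])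
    also have "\<dots> \<le> (1/t) *\<^sub>R (b * b) + (1/t) *\<^sub>R (b * b)"
      using t0 by (intro add_mono scaleR_left_mono bp pb') auto
    finally have Tp: "T p \<le> (1/t) *\<^sub>R (2 *\<^sub>R (b * b))" by (simp add: scaleR_2 scaleR_right_distrib)
    have Tc: "T c = (1/t) *\<^sub>R (2 *\<^sub>R (a * a))" by (simp add: T_def c_def scaleR_2 scaleR_right_distrib)
    have "ab d \<le> (1/t) *\<^sub>R (2 *\<^sub>R (a * a)) + (1/t) *\<^sub>R (2 *\<^sub>R (b * b))"
      using 1 Tp Tc by (simp add: p_def) (metis add_left_mono order_trans)
    thus ?thesis by (simp add: t_def scaleR_right_distrib)
  qed
  have "ab d = 0" by (rule arch_zero[OF AR ab_ge0 bound])
  hence "d = 0" by (rule ab_zero_imp)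
  thus ?thesis by (simp add: d_def)
qed



lemma root_unique:
  fixes r t :: "'a::{real_algebra,ordered_real_vector,lattice}"
  assumes FA: "f_algebra TYPE('a)" and AR: "archimedean_vl TYPE('a)"
    and SP: "semiprime_over K TYPE('a)"
    and r: "0 \<le> r" and t: "0 \<le> t" and eq: "r * r = t * t"
  shows "r = t"
proof -
  define x where "x = r - t"
  define y where "y = r + t"
  define p where "p = pos x"
  define q where "q = ng x"
  have y0: "0 \<le> y" using r t by (simp add: y_def)
  have "x * y = r * r - t * t + (r * t - t * r)" by (simp add: x_def y_def algebra_simps)
  hence xy: "x * y = 0" using eq comm_pos[OF FA AR r t] by simp
  have mt: "- t \<le> t" using t by (meson neg_le_0_iff_le order_trans)
  have mr: "- r \<le> r" using r by (meson neg_le_0_iff_le order_trans)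
  have py: "p \<le> y" unfolding p_def x_def y_def
    using y0 add_left_mono[OF mt, of r] by (intro pos_least) (simp_all add: y_def)
  have qy: "q \<le> y" unfolding q_def ng_as_pos x_def y_def
    using y0 add_left_mono[OF mr, of t] by (intro pos_least) (simp_all add: y_def add.commute)
  have p0: "0 \<le> p" and q0: "0 \<le> q" by (simp_all add: p_def q_def)
  have "x = p - q" by (simp add: p_def q_def pos_ng)
  hence "p * y - q * y = 0" using xy by (simp add: left_diff_distrib)
  hence pyqy: "p * y = q * y" by simp
  have "inf p q = 0" by (simp add: p_def q_def pos_ng_disj)
  hence "inf (p * y) q = 0" by (rule fa_dR[OF FA _ y0])
  hence "inf q (p * y) = 0" by (simp add: inf_commute)
  hence "inf (q * y) (p * y) = 0" by (rule fa_dR[OF FA _ y0])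
  hence pyz: "p * y = 0" and qyz: "q * y = 0" using pyqy by simp_all
  have "p * p \<le> p * y" by (rule fa_monoL[OF FA p0 py])
  hence "p * p = 0" using pyz fa_nonneg[OF FA p0 p0] by (simp add: order.antisym)
  hence pz: "p = 0" by (rule sq_zero[OF SP])
  have "q * q \<le> q * y" by (rule fa_monoL[OF FA q0 qy])
  hence "q * q = 0" using qyz fa_nonneg[OF FA q0 q0] by (simp add: order.antisym)
  hence qz: "q = 0" by (rule sq_zero[OF SP])
  have "x = 0" using \<open>x = p - q\<close> pz qz by simp
  thus ?thesis by (simp add: x_def)
qed

lemma mm_sq:
  fixes x c Q :: "'a::{real_algebra,ordered_real_vector,lattice}"
  assumes FA: "f_algebra TYPE('a)"
    and le: "\<And>j. j \<le> N \<Longrightarrow> Q \<le> ab (x - real j *\<^sub>R c) * ab (x - real j *\<^sub>R c)"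
  shows "Q \<le> mm x c N * mm x c N"
  using le
proof (induction N)
  case 0
  then show ?case by (metis mm.simps(1) le0 diff_zero of_nat_0 scaleR_zero_left)
next
  case (Suc N)
  have "Q \<le> mm x c N * mm x c N" using Suc by simp
  moreover have "Q \<le> ab (x - real (Suc N) *\<^sub>R c) * ab (x - real (Suc N) *\<^sub>R c)" by (rule Suc.prems) simp
  ultimately show ?case by (simp add: sq_inf[OF FA mm_nonneg ab_ge0])
qed

lemma upper_bound:
  fixes f g s :: "'a::{real_algebra,ordered_real_vector,lattice}"
  assumes FA: "f_algebra TYPE('a)" and AR: "archimedean_vl TYPE('a)"
    and f: "0 \<le> f" and g: "0 \<le> g" and s: "0 \<le> s"
    and sle: "\<And>th. th > 0 \<Longrightarrow> s \<le> th *\<^sub>R f + inverse th *\<^sub>R g"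
  shows "s * s \<le> 4 *\<^sub>R (f * g)"
proof -
  define D where "D = s * s - 4 *\<^sub>R (f * g)"
  have fs: "s * f = f * s" using comm_pos[OF FA AR s f] .
  have fg0: "0 \<le> f * g" using fa_nonneg[OF FA f g] .
  have Dth: "D \<le> ((2 * th) *\<^sub>R f - s) * ((2 * th) *\<^sub>R f - s)" if th: "th \<ge> 0" for th :: real
  proof (cases "th = 0")
    case True
    have "0 \<le> 4 *\<^sub>R (f * g)" using fg0 by (intro scaleR_nonneg_nonneg) auto
    thus ?thesis using True by (simp add: D_def)
  next
    case False
    hence th: "th > 0" using th by simp
    have h1: "th * (inverse th * 4) = 4" using th by simp
    have h2: "(th * 4) *\<^sub>R x = (th * 2) *\<^sub>R x + (th * 2) *\<^sub>R x" for x :: 'a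
      by (simp flip: scaleR_add_left)
    have eq: "((2 * th) *\<^sub>R f - s) * ((2 * th) *\<^sub>R f - s) - D
       = (4 * th) *\<^sub>R (f * (th *\<^sub>R f + inverse th *\<^sub>R g - s))"
      using th by (simp add: D_def algebra_simps fs scaleR_diff_right h1 h2)
    have "0 \<le> th *\<^sub>R f + inverse th *\<^sub>R g - s" using sle[OF th] by simp
    hence "0 \<le> f * (th *\<^sub>R f + inverse th *\<^sub>R g - s)" by (rule fa_nonneg[OF FA f])
    hence "0 \<le> (4 * th) *\<^sub>R (f * (th *\<^sub>R f + inverse th *\<^sub>R g - s))"
      using th by (intro scaleR_nonneg_nonneg) auto
    hence "0 \<le> ((2 * th) *\<^sub>R f - s) * ((2 * th) *\<^sub>R f - s) - D" by (simp only: eq)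
    thus ?thesis by (simp only: diff_ge_0_iff_ge)
  qed
  have bound: "pos D \<le> (1 / real n) *\<^sub>R ((2 *\<^sub>R f + g) * (2 *\<^sub>R f + g))" if n: "n \<ge> 1" for n :: nat
  proof -
    define N where "N = n * n"
    define c where "c = (2 / real n) *\<^sub>R f"
    have c0: "0 \<le> c" using f unfolding c_def by (intro scaleR_nonneg_nonneg) auto
    have "D \<le> mm s c N * mm s c N"
    proof (rule mm_sq[OF FA])
      fix j assume "j \<le> N"
      have "ab (s - real j *\<^sub>R c) * ab (s - real j *\<^sub>R c) = (s - real j *\<^sub>R c) * (s - real j *\<^sub>R c)"
        by (rule sq_ab[OF FA])
      also have "\<dots> = ((2 * (real j / real n)) *\<^sub>R f - s) * ((2 * (real j / real n)) *\<^sub>R f - s)"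
        by (simp add: c_def algebra_simps)
      finally show "D \<le> ab (s - real j *\<^sub>R c) * ab (s - real j *\<^sub>R c)"
        using Dth[of "real j / real n"] by simp
    qed
    moreover have "mm s c N \<le> (1 / real n) *\<^sub>R (2 *\<^sub>R f + g)"
    proof -
      have Nc: "real N *\<^sub>R c = (2 * real n) *\<^sub>R f" using n by (simp add: N_def c_def)
      have n0: "real n > 0" using n by simp
      have hh: "(2 * real n) *\<^sub>R f = real n *\<^sub>R f + real n *\<^sub>R f" by (simp flip: scaleR_add_left)
      have "s \<le> real n *\<^sub>R f + inverse (real n) *\<^sub>R g" using sle[OF n0] .
      hence "s - (2 * real n) *\<^sub>R f \<le> (real n *\<^sub>R f + inverse (real n) *\<^sub>R g) - (2 * real n) *\<^sub>R f"
        by (rule diff_right_mono)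
      also have "\<dots> = inverse (real n) *\<^sub>R g - real n *\<^sub>R f" unfolding hh by simp
      also have "\<dots> \<le> inverse (real n) *\<^sub>R g"
        using f n0 by (simp add: scaleR_nonneg_nonneg)
      finally have sl: "s - (2 * real n) *\<^sub>R f \<le> inverse (real n) *\<^sub>R g" .
      have "pos (s - real N *\<^sub>R c) \<le> inverse (real n) *\<^sub>R g"
        unfolding Nc using g n0 sl by (intro pos_least) (simp_all add: scaleR_nonneg_nonneg)
      hence "c + pos (s - real N *\<^sub>R c) \<le> c + inverse (real n) *\<^sub>R g" by (rule add_left_mono)
      also have "\<dots> = (1 / real n) *\<^sub>R (2 *\<^sub>R f + g)"
        by (simp add: c_def scaleR_add_right divide_inverse)
      finally show ?thesis using mm_bound[OF s c0, of N] by simp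
    qed
    ultimately have "D \<le> ((1 / real n) *\<^sub>R (2 *\<^sub>R f + g)) * ((1 / real n) *\<^sub>R (2 *\<^sub>R f + g))"
      using sq_mono[OF FA mm_nonneg] by (meson order_trans)
    also have "\<dots> = (1 / real n) *\<^sub>R ((1 / real n) *\<^sub>R ((2 *\<^sub>R f + g) * (2 *\<^sub>R f + g)))"
      by simp
    also have "\<dots> \<le> (1 / real n) *\<^sub>R ((2 *\<^sub>R f + g) * (2 *\<^sub>R f + g))"
    proof -
      have sq0: "0 \<le> (2 *\<^sub>R f + g) * (2 *\<^sub>R f + g)" by (rule sq_nonneg[OF FA])
      have "(1 / real n) *\<^sub>R ((2 *\<^sub>R f + g) * (2 *\<^sub>R f + g)) \<le> 1 *\<^sub>R ((2 *\<^sub>R f + g) * (2 *\<^sub>R f + g))"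
        using n sq0 by (intro scaleR_right_mono) auto
      thus ?thesis using n by (intro scaleR_left_mono) auto
    qed
    finally have "D \<le> (1 / real n) *\<^sub>R ((2 *\<^sub>R f + g) * (2 *\<^sub>R f + g))" .
    moreover have "0 \<le> (1 / real n) *\<^sub>R ((2 *\<^sub>R f + g) * (2 *\<^sub>R f + g))"
      using sq_nonneg[OF FA] by (intro scaleR_nonneg_nonneg) auto
    ultimately show ?thesis by (rule pos_least)
  qed
  have "pos D = 0" by (rule arch_zero[OF AR pos_ge0 bound])
  hence "D \<le> 0" using le_pos[of D] by simp
  thus ?thesis by (simp add: D_def)
qed

lemma quad_ineq:
  fixes f g :: "'a::{real_algebra,ordered_real_vector,lattice}"
  assumes FA: "f_algebra TYPE('a)" and fg: "g * f = f * g"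
  shows "(2 * a * b) *\<^sub>R (f * g) \<le> (a * a) *\<^sub>R (f * f) + (b * b) *\<^sub>R (g * g)"
proof -
  have h2: "(a * (b * 2)) *\<^sub>R x = (a * b) *\<^sub>R x + (a * b) *\<^sub>R x" for x :: 'a
    by (simp flip: scaleR_add_left)
  have "(a *\<^sub>R f - b *\<^sub>R g) * (a *\<^sub>R f - b *\<^sub>R g)
     = ((a * a) *\<^sub>R (f * f) + (b * b) *\<^sub>R (g * g)) - (2 * a * b) *\<^sub>R (f * g)"
    by (simp add: algebra_simps fg h2)
  moreover have "0 \<le> (a *\<^sub>R f - b *\<^sub>R g) * (a *\<^sub>R f - b *\<^sub>R g)" by (rule sq_nonneg[OF FA])
  ultimately show ?thesis by (simp only: diff_ge_0_iff_ge)
qed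

lemma sq_plus:
  fixes f g :: "'a::{real_algebra,ordered_real_vector,lattice}"
  assumes fg: "g * f = f * g"
  shows "(a *\<^sub>R f + b *\<^sub>R g) * (a *\<^sub>R f + b *\<^sub>R g)
     = (a * a) *\<^sub>R (f * f) + (b * b) *\<^sub>R (g * g) + (2 * a * b) *\<^sub>R (f * g)"
proof -
  have h2: "(a * (b * 2)) *\<^sub>R x = (a * b) *\<^sub>R x + (a * b) *\<^sub>R x" for x :: 'a
    by (simp flip: scaleR_add_left)
  show ?thesis by (simp add: algebra_simps fg h2)
qed


fun lm :: "real \<Rightarrow> real \<Rightarrow> (nat \<Rightarrow> real) \<Rightarrow> 'a::{ordered_real_vector,lattice} \<Rightarrow> 'a \<Rightarrow> nat \<Rightarrow> 'a" where
  "lm c mu t f g 0 = inf (c *\<^sub>R f) (c *\<^sub>R g)"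
| "lm c mu t f g (Suc k) = inf (lm c mu t f g k) (mu *\<^sub>R (t k *\<^sub>R f + inverse (t k) *\<^sub>R g))"

lemma lm_le_cf: "lm c mu t f g K \<le> c *\<^sub>R f"
  by (induction K) (auto intro: le_infI1)

lemma lm_le_cg: "lm c mu t f g K \<le> c *\<^sub>R g"
  by (induction K) (auto intro: le_infI1)

lemma lm_le_t: "k < K \<Longrightarrow> lm c mu t f g K \<le> mu *\<^sub>R (t k *\<^sub>R f + inverse (t k) *\<^sub>R g)"
proof (induction K)
  case 0 then show ?case by simp
next
  case (Suc K)
  show ?case
  proof (cases "k = K")
    case True then show ?thesis by simp
  next
    case False
    hence "k < K" using Suc.prems by simp
    thus ?thesis using Suc.IH by (auto intro: le_infI1)
  qed
qed

lemma lm_nonneg: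
  assumes "0 \<le> c" "0 \<le> mu" "\<And>k. 0 \<le> t k" "0 \<le> f" "0 \<le> g"
  shows "0 \<le> lm c mu t f g K"
  using assms by (induction K) (auto intro!: scaleR_nonneg_nonneg add_nonneg_nonneg)

lemma lm_sq:
  fixes f g Q :: "'a::{real_algebra,ordered_real_vector,lattice}"
  assumes FA: "f_algebra TYPE('a)"
    and nn: "0 \<le> c" "0 \<le> mu" "\<And>k. 0 \<le> t k" "0 \<le> f" "0 \<le> g"
    and qf: "Q \<le> (c *\<^sub>R f) * (c *\<^sub>R f)" and qg: "Q \<le> (c *\<^sub>R g) * (c *\<^sub>R g)"
    and qt: "\<And>k. Q \<le> (mu *\<^sub>R (t k *\<^sub>R f + inverse (t k) *\<^sub>R g)) * (mu *\<^sub>R (t k *\<^sub>R f + inverse (t k) *\<^sub>R g))"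
  shows "Q \<le> lm c mu t f g K * lm c mu t f g K"
proof (induction K)
  case 0
  have "0 \<le> c *\<^sub>R f" "0 \<le> c *\<^sub>R g" using nn by (auto intro: scaleR_nonneg_nonneg)
  thus ?case using qf qg by (simp add: sq_inf[OF FA])
next
  case (Suc K)
  have "0 \<le> mu *\<^sub>R (t K *\<^sub>R f + inverse (t K) *\<^sub>R g)"
    using nn by (auto intro!: scaleR_nonneg_nonneg add_nonneg_nonneg)
  thus ?case using Suc qt[of K] by (simp add: sq_inf[OF FA lm_nonneg[OF nn]])
qed

lemma step_exists: "P 0 \<Longrightarrow> \<not> P M \<Longrightarrow> \<exists>k<M. P k \<and> \<not> P (Suc k)"
  by (induction M) (auto simp: less_Suc_eq)


lemma lower_bound:
  fixes f g s :: "'a::{real_algebra,ordered_real_vector,lattice}"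
  assumes FA: "f_algebra TYPE('a)" and AR: "archimedean_vl TYPE('a)"
    and f: "0 \<le> f" and g: "0 \<le> g" and s: "0 \<le> s"
    and sglb: "\<And>u. (\<And>th. th > 0 \<Longrightarrow> u \<le> th *\<^sub>R f + inverse th *\<^sub>R g) \<Longrightarrow> u \<le> s"
  shows "4 *\<^sub>R (f * g) \<le> s * s"
proof -
  have fg: "g * f = f * g" using comm_pos[OF FA AR g f] .
  define P where "P = f * g"
  define F where "F = f * f"
  define G where "G = g * g"
  have P0: "0 \<le> P" and F0: "0 \<le> F" and G0: "0 \<le> G"
    using fa_nonneg[OF FA] f g by (auto simp: P_def F_def G_def)
  define E where "E = 4 *\<^sub>R P - s * s"
  define K where "K = 8 *\<^sub>R P + (F + G)"
  have K0: "0 \<le> K" using P0 F0 G0 by (auto simp: K_def intro!: add_nonneg_nonneg scaleR_nonneg_nonneg)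
  have bound: "pos E \<le> (1 / real n) *\<^sub>R K" if n: "n \<ge> 1" for n :: nat
  proof -
    have n0: "real n > 0" using n by simp
    define rho where "rho = 1 + 1 / real n"
    have rho1: "rho > 1" using n0 by (simp add: rho_def)
    define mu where "mu = 1 / rho"
    have mu0: "0 < mu" "mu \<le> 1" using rho1 by (auto simp: mu_def)
    obtain N where N: "2 * real n < rho ^ N" using real_arch_pow[OF rho1] by blast
    define c where "c = rho ^ N"
    have c0: "c > 0" using rho1 by (simp add: c_def)
    define t where "t = (\<lambda>k. rho ^ k / c)"
    have tpos: "\<And>k. t k > 0" using rho1 c0 by (simp add: t_def)
    have t_0: "t 0 = inverse c" by (simp add: t_def divide_inverse)
    have t_2N: "t (2 * N) = c" using c0 by (simp add: t_def c_def power_mult_distrib power_mult power2_eq_square)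
    have tS: "t (Suc k) = rho * t k" for k by (simp add: t_def)
    define l where "l = lm c mu t f g (2 * N + 1)"
    have l_le: "l \<le> s"
    proof (rule sglb)
      fix th :: real assume th: "th > 0"
      have thf: "0 \<le> th *\<^sub>R f" and thg: "0 \<le> inverse th *\<^sub>R g"
        using th f g by (auto intro: scaleR_nonneg_nonneg)
      show "l \<le> th *\<^sub>R f + inverse th *\<^sub>R g"
      proof (cases "c \<le> th")
        case True
        have "l \<le> c *\<^sub>R f" unfolding l_def by (rule lm_le_cf)
        also have "\<dots> \<le> th *\<^sub>R f" using True f by (rule scaleR_right_mono)
        also have "\<dots> \<le> th *\<^sub>R f + inverse th *\<^sub>R g" using thg by (simp add: add_increasing2)
        finally show ?thesis .
      next
        case cth: False
        show ?thesis
        proof (cases "th \<le> inverse c")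
          case True
          have "c \<le> inverse th"
            using True th c0 by (metis inverse_inverse_eq le_imp_inverse_le)
          have "l \<le> c *\<^sub>R g" unfolding l_def by (rule lm_le_cg)
          also have "\<dots> \<le> inverse th *\<^sub>R g" using \<open>c \<le> inverse th\<close> g by (rule scaleR_right_mono)
          also have "\<dots> \<le> th *\<^sub>R f + inverse th *\<^sub>R g" using thf by (simp add: add_increasing)
          finally show ?thesis .
        next
          case False
          have P0': "t 0 \<le> th" using False t_0 by simp
          have P1': "\<not> t (2 * N) \<le> th" using cth t_2N by simp
          obtain k where k: "k < 2 * N" "t k \<le> th" "\<not> t (Suc k) \<le> th"
            using step_exists[of "\<lambda>k. t k \<le> th", OF P0' P1'] by blast
          have "l \<le> mu *\<^sub>R (t k *\<^sub>R f + inverse (t k) *\<^sub>R g)"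
            unfolding l_def by (rule lm_le_t) (use k in simp)
          also have "\<dots> = (mu * t k) *\<^sub>R f + (mu * inverse (t k)) *\<^sub>R g"
            by (simp add: scaleR_add_right)
          also have "\<dots> \<le> th *\<^sub>R f + inverse th *\<^sub>R g"
          proof (intro add_mono scaleR_right_mono f g)
            have "mu * t k \<le> 1 * t k" using mu0 tpos[of k] by (intro mult_right_mono) auto
            thus "mu * t k \<le> th" using k by simp
            have "th \<le> rho * t k" using k tS[of k] by simp
            hence "inverse (rho * t k) \<le> inverse th" using th by (rule le_imp_inverse_le)
            thus "mu * inverse (t k) \<le> inverse th" by (simp add: mu_def divide_inverse mult.commute)
          qed
          finally show ?thesis .
        qed
      qed
    qed
    have nn: "0 \<le> c" "0 \<le> mu" "\<And>k. 0 \<le> t k" using c0 mu0 tpos by (auto intro: less_imp_le)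
    have l0: "0 \<le> l" unfolding l_def by (rule lm_nonneg[OF nn f g])
    have lls: "l * l \<le> s * s" by (rule sq_mono[OF FA l0 l_le])
    define gam where "gam = 4 / (c * c)"
    have gam0: "0 \<le> gam" by (simp add: gam_def)
    define Z where "Z = (4 * mu * mu) *\<^sub>R P - gam *\<^sub>R (F + G)"
    have Z4: "Z \<le> 4 *\<^sub>R P - gam *\<^sub>R G" "Z \<le> 4 *\<^sub>R P - gam *\<^sub>R F"
    proof -
      have a: "(4 * mu * mu) *\<^sub>R P \<le> 4 *\<^sub>R P"
      proof (rule scaleR_right_mono[OF _ P0])
        have "mu * mu \<le> 1 * 1" using mu0 by (intro mult_mono) auto
        thus "4 * mu * mu \<le> 4" by simp
      qed
      have b: "gam *\<^sub>R G \<le> gam *\<^sub>R (F + G)" using gam0 F0 by (intro scaleR_left_mono) auto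
      have b': "gam *\<^sub>R F \<le> gam *\<^sub>R (F + G)" using gam0 G0 by (intro scaleR_left_mono) auto
      show "Z \<le> 4 *\<^sub>R P - gam *\<^sub>R G" unfolding Z_def by (rule diff_mono[OF a b])
      show "Z \<le> 4 *\<^sub>R P - gam *\<^sub>R F" unfolding Z_def by (rule diff_mono[OF a b'])
    qed
    have "Z \<le> l * l" unfolding l_def
    proof (rule lm_sq[OF FA nn f g])
      have q: "(2 * c * (2 / c)) *\<^sub>R (f * g) \<le> (c * c) *\<^sub>R (f * f) + ((2 / c) * (2 / c)) *\<^sub>R (g * g)"
        by (rule quad_ineq[OF FA fg])
      hence "4 *\<^sub>R P \<le> (c * c) *\<^sub>R F + gam *\<^sub>R G" using c0 by (simp add: P_def F_def G_def gam_def)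
      hence "4 *\<^sub>R P - gam *\<^sub>R G \<le> (c * c) *\<^sub>R F" by (simp add: diff_le_eq)
      thus "Z \<le> (c *\<^sub>R f) * (c *\<^sub>R f)" using Z4(1) by (simp add: F_def)
      have q: "(2 * (2 / c) * c) *\<^sub>R (f * g) \<le> ((2 / c) * (2 / c)) *\<^sub>R (f * f) + (c * c) *\<^sub>R (g * g)"
        by (rule quad_ineq[OF FA fg])
      hence "4 *\<^sub>R P \<le> gam *\<^sub>R F + (c * c) *\<^sub>R G" using c0 by (simp add: P_def F_def G_def gam_def)
      hence "4 *\<^sub>R P - gam *\<^sub>R F \<le> (c * c) *\<^sub>R G" by (simp add: diff_le_eq add.commute)
      thus "Z \<le> (c *\<^sub>R g) * (c *\<^sub>R g)" using Z4(2) by (simp add: G_def)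
    next
      fix k
      define a where "a = t k"
      have a0: "a > 0" using tpos by (simp add: a_def)
      have q: "(2 * a * inverse a) *\<^sub>R (f * g) \<le> (a * a) *\<^sub>R (f * f) + (inverse a * inverse a) *\<^sub>R (g * g)"
        by (rule quad_ineq[OF FA fg])
      have h2: "2 * a * inverse a = 2" using a0 by simp
      have q': "2 *\<^sub>R P \<le> (a * a) *\<^sub>R F + (inverse a * inverse a) *\<^sub>R G"
        using q unfolding h2 P_def F_def G_def .
      have e: "(mu *\<^sub>R (a *\<^sub>R f + inverse a *\<^sub>R g)) * (mu *\<^sub>R (a *\<^sub>R f + inverse a *\<^sub>R g))
          = (mu * mu) *\<^sub>R ((a * a) *\<^sub>R F + (inverse a * inverse a) *\<^sub>R G + 2 *\<^sub>R P)"
        using sq_plus[OF fg, of a "inverse a"] a0 by (simp add: P_def F_def G_def)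
      have "4 *\<^sub>R P \<le> (a * a) *\<^sub>R F + (inverse a * inverse a) *\<^sub>R G + 2 *\<^sub>R P"
      proof -
        have "4 *\<^sub>R P = 2 *\<^sub>R P + 2 *\<^sub>R P" by (simp flip: scaleR_add_left)
        thus ?thesis using q' by (simp add: add_right_mono)
      qed
      hence "(mu * mu) *\<^sub>R (4 *\<^sub>R P) \<le> (mu * mu) *\<^sub>R ((a * a) *\<^sub>R F + (inverse a * inverse a) *\<^sub>R G + 2 *\<^sub>R P)"
        by (intro scaleR_left_mono) auto
      moreover have "Z \<le> (mu * mu) *\<^sub>R (4 *\<^sub>R P)"
      proof -
        have "gam *\<^sub>R (F + G) \<ge> 0" using gam0 F0 G0 by (intro scaleR_nonneg_nonneg add_nonneg_nonneg)
        hence "(4 * mu * mu) *\<^sub>R P - gam *\<^sub>R (F + G) \<le> (4 * mu * mu) *\<^sub>R P"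
          by (metis diff_le_eq add_increasing2 order_refl)
        moreover have "(mu * mu) *\<^sub>R (4 *\<^sub>R P) = (4 * mu * mu) *\<^sub>R P" by (simp add: mult.commute mult.left_commute)
        ultimately show ?thesis by (simp only: Z_def)
      qed
      ultimately have "Z \<le> (mu *\<^sub>R (a *\<^sub>R f + inverse a *\<^sub>R g)) * (mu *\<^sub>R (a *\<^sub>R f + inverse a *\<^sub>R g))"
        unfolding e by (rule order_trans[rotated])
      thus "Z \<le> (mu *\<^sub>R (t k *\<^sub>R f + inverse (t k) *\<^sub>R g)) * (mu *\<^sub>R (t k *\<^sub>R f + inverse (t k) *\<^sub>R g))"
        by (simp only: a_def)
    qed
    hence Zs: "Z \<le> s * s" using lls by simp
    have "E \<le> 4 *\<^sub>R P - Z" unfolding E_def using Zs by (rule diff_left_mono)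
    also have "4 *\<^sub>R P - Z = (4 - 4 * mu * mu) *\<^sub>R P + gam *\<^sub>R (F + G)"
      by (simp add: Z_def algebra_simps)
    also have "\<dots> \<le> (8 / real n) *\<^sub>R P + (1 / real n) *\<^sub>R (F + G)"
    proof (intro add_mono scaleR_right_mono P0 add_nonneg_nonneg F0 G0)
      have mu_eq: "mu = real n / (real n + 1)" using n0 by (simp add: mu_def rho_def field_simps)
      have m1: "1 - mu = 1 / (real n + 1)" using n0 by (simp add: mu_eq field_simps)
      have "4 - 4 * mu * mu = 4 * (1 - mu) * (1 + mu)" by (simp add: algebra_simps)
      also have "\<dots> \<le> 4 * (1 - mu) * 2" using mu0 by (intro mult_left_mono) auto
      also have "\<dots> = 8 / (real n + 1)" by (simp add: m1)
      also have "\<dots> \<le> 8 / real n" using n0 by (intro divide_left_mono) auto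
      finally show "4 - 4 * mu * mu \<le> 8 / real n" .
      have "2 * real n * (2 * real n) \<le> c * c" using N n0 by (intro mult_mono) (auto simp: c_def)
      moreover have "4 * real n \<le> 2 * real n * (2 * real n)" using n by simp
      ultimately have "4 * real n \<le> c * c" by linarith
      thus "gam \<le> 1 / real n" using n0 c0 by (simp add: gam_def field_simps)
    qed
    also have "\<dots> = (1 / real n) *\<^sub>R K" by (simp add: K_def scaleR_add_right)
    finally have "E \<le> (1 / real n) *\<^sub>R K" .
    moreover have "0 \<le> (1 / real n) *\<^sub>R K" using K0 by (intro scaleR_nonneg_nonneg) auto
    ultimately show ?thesis by (rule pos_least)
  qed
  have "pos E = 0" by (rule arch_zero[OF AR pos_ge0 bound])
  hence "E \<le> 0" using le_pos[of E] by simp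
  thus ?thesis by (simp add: E_def P_def)
qed


theorem proposition2p1:
  fixes K_is_C :: bool and f g :: "'a::{real_algebra,ordered_real_vector,lattice}"
  assumes "archimedean_f_algebra_over K_is_C TYPE('a)"
    and "semiprime_over K_is_C TYPE('a)"
    and "geometric_mean_closed TYPE('a)"
    and "0 \<le> f" and "0 \<le> g"
  shows "nth_root_exists 2 (f * g) \<and> f \<boxtimes> g = nth_root_A 2 (f * g)"
proof -
  have FA: "f_algebra TYPE('a)" and AR: "archimedean_vl TYPE('a)"
    using assms(1) by (simp_all add: archimedean_f_algebra_over_def)
  have SP: "semiprime_over K_is_C TYPE('a)" by (rule assms(2))
  have f: "0 \<le> f" and g: "0 \<le> g" by (rule assms(4), rule assms(5))
  define S where "S = {\<theta> *\<^sub>R f + inverse \<theta> *\<^sub>R g | \<theta>. \<theta> > 0}"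
  obtain s where sinf: "is_inf_of S s"
    using assms(3) f g unfolding geometric_mean_closed_def S_def by blast
  have sle: "\<And>th. th > 0 \<Longrightarrow> s \<le> th *\<^sub>R f + inverse th *\<^sub>R g"
    using sinf unfolding is_inf_of_def S_def by blast
  have sglb: "\<And>u. (\<And>th. th > 0 \<Longrightarrow> u \<le> th *\<^sub>R f + inverse th *\<^sub>R g) \<Longrightarrow> u \<le> s"
  proof -
    fix u :: 'a assume h: "\<And>th. th > 0 \<Longrightarrow> u \<le> th *\<^sub>R f + inverse th *\<^sub>R g"
    have "\<forall>x\<in>S. u \<le> x" using h unfolding S_def by blast
    thus "u \<le> s" using sinf unfolding is_inf_of_def by blast
  qed
  have s0: "0 \<le> s"
  proof (rule sglb)
    fix th :: real assume "th > 0"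
    thus "0 \<le> th *\<^sub>R f + inverse th *\<^sub>R g" using f g
      by (intro add_nonneg_nonneg scaleR_nonneg_nonneg) auto
  qed
  have ss: "s * s = 4 *\<^sub>R (f * g)"
    using upper_bound[OF FA AR f g s0 sle] lower_bound[OF FA AR f g s0 sglb] by (rule order.antisym)
  define r where "r = (1/2) *\<^sub>R s"
  have r0: "0 \<le> r" using s0 by (simp add: r_def scaleR_nonneg_nonneg)
  have rr: "r * r = f * g" by (simp add: r_def ss)
  have uniq: "\<And>x. 0 \<le> x \<and> npow x (2 - 1) = f * g \<Longrightarrow> x = r"
  proof -
    fix x assume h: "0 \<le> x \<and> npow x (2 - 1) = f * g"
    hence "x * x = r * r" using rr by simp
    thus "x = r" using root_unique[OF FA AR SP] h r0 by blast
  qed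
  have ex: "0 \<le> r \<and> npow r (2 - 1) = f * g" using r0 rr by simp
  have exu: "nth_root_exists 2 (f * g)" unfolding nth_root_exists_def using ex uniq by blast
  have A: "nth_root_A 2 (f * g) = r" unfolding nth_root_A_def using ex uniq by (rule the_equality)
  have Ts: "(THE s. is_inf_of {\<theta> *\<^sub>R f + inverse \<theta> *\<^sub>R g | \<theta>. \<theta> > 0} s) = s"
  proof (rule the_equality)
    show "is_inf_of {\<theta> *\<^sub>R f + inverse \<theta> *\<^sub>R g | \<theta>. \<theta> > 0} s" using sinf by (simp add: S_def)
    fix s' assume "is_inf_of {\<theta> *\<^sub>R f + inverse \<theta> *\<^sub>R g | \<theta>. \<theta> > 0} s'"
    hence "is_inf_of S s'" by (simp add: S_def)
    thus "s' = s" using sinf unfolding is_inf_of_def by (meson order.antisym)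
  qed
  have "f \<boxtimes> g = r" by (simp add: gmean_def Ts r_def)
  thus ?thesis using exu A by simp
qed


end
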